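(* Let $\mu$ be a finite positive Borel measure on $\mathbb{R}$ and let $\alpha>0$. Let $\nu$ be the measure $d\nu(x)=\frac{d\mu(x)}{1+|x|^\alpha}$. Then for every $1\leqslant p\leqslant\infty$, $\mathcal{G}^p_\mu=\mathcal{G}^p_\nu$.
   Context: For a finite positive Borel measure $\mu$ on $\mathbb{R}$ and $1\leqslant p\leqslant\infty$, $$\mathcal{G}^p_\mu=\sup\Big\{a>0:\ \exists\, f\in L^p(\mu),\ f\neq 0,\ \int f(x)e^{i\lambda x}\,d\mu(x)=0\ \ \forall\lambda\in[0,a]\Big\},$$ with $\mathcal{G}^p_\mu=0$ if the set is empty. *)

theory Defs
  imports "HOL-Analysis.Analysis"
begin

definition in_Lp :: "'a measure \<Rightarrow> ennreal \<Rightarrow> ('a \<Rightarrow> complex) \<Rightarrow> bool" where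
  "in_Lp M p f \<longleftrightarrow> f \<in> borel_measurable M \<and>
     (if p = \<infinity> then (\<exists>C. AE x in M. norm (f x) \<le> C)
      else (\<integral>\<^sup>+ x. ennreal (norm (f x) powr enn2real p) \<partial>M) < \<infinity>)"

text \<open>Gap-type quantity G^p_M; value in [0, infinity], Sup of the empty set is 0.\<close>
definition gap_G :: "real measure \<Rightarrow> ennreal \<Rightarrow> ennreal" where
  "gap_G M p = Sup (ennreal ` {a::real. a > 0 \<and>
      (\<exists>f. in_Lp M p f \<and> \<not> (AE x in M. f x = 0) \<and>
        (\<forall>t\<in>{0..a}. (\<integral>x. f x * exp (\<i> * complex_of_real (t * x)) \<partial>M) = 0))})"

end

theory Submission imports Defs begin


definition E :: "real \<Rightarrow> real \<Rightarrow> complex" where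
  "E t x = exp (\<i> * complex_of_real (t * x))"

definition H :: "real \<Rightarrow> real \<Rightarrow> complex" where
  "H d x = (\<integral>s. indicator {0..d} s *\<^sub>R exp (complex_of_real s * (1 + \<i> * complex_of_real x)) \<partial>lborel)"

lemma E_meas[measurable]: "(\<lambda>p. E (t + fst p) (snd p)) \<in> borel_measurable (borel \<Otimes>\<^sub>M borel)"
  unfolding E_def borel_prod by (intro borel_measurable_continuous_onI continuous_intros)

lemma step:
  fixes \<mu> :: "real measure" and g :: "real \<Rightarrow> complex"
  assumes sets: "sets \<mu> = sets borel" and fin: "finite_measure \<mu>"
    and gi: "integrable \<mu> g" and d: "d > 0"
    and ann: "\<forall>t\<in>{0..b}. (\<integral>x. g x * E t x \<partial>\<mu>) = 0"
    and t: "t \<in> {0..b-d}"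
  shows "(\<integral>x. g x * H d x * E t x \<partial>\<mu>) = 0"
proof -
  interpret finite_measure \<mu> by fact
  interpret P: pair_sigma_finite lborel \<mu> 
    by (simp add: pair_sigma_finite.intro sigma_finite_measure_axioms lborel.sigma_finite_measure_axioms)
  define F where "F s x = indicator {0..d} s *\<^sub>R (exp s *\<^sub>R (g x * E (t+s) x))" for s x
  have gm[measurable]: "g \<in> borel_measurable borel"
  proof -
    have "borel_measurable \<mu> = (borel_measurable borel :: (real \<Rightarrow> complex) set)"
      by (rule measurable_cong_sets[OF sets refl])
    then show ?thesis using borel_measurable_integrable[OF gi] by simp
  qed
  have Fm: "(\<lambda>p. F (fst p) (snd p)) \<in> borel_measurable (lborel \<Otimes>\<^sub>M \<mu>)"
  proof -
    have "(\<lambda>p. F (fst p) (snd p)) \<in> borel_measurable (borel \<Otimes>\<^sub>M borel)"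
      unfolding F_def using E_meas[of t] by measurable
    moreover have "sets (lborel \<Otimes>\<^sub>M \<mu>) = sets (borel \<Otimes>\<^sub>M borel)"
      using sets by (intro sets_pair_measure_cong) auto
    ultimately show ?thesis using measurable_cong_sets by blast
  qed
  have Fi: "integrable (lborel \<Otimes>\<^sub>M \<mu>) (\<lambda>p. F (fst p) (snd p))"
  proof (rule P.Fubini_integrable[OF Fm])
    have "(\<lambda>s. \<integral>x. norm (F (fst (s,x)) (snd (s,x))) \<partial>\<mu>) = (\<lambda>s. (exp s * (\<integral>x. norm (g x) \<partial>\<mu>)) * indicator {0..d} s)"
      by (rule ext) (simp add: F_def norm_mult E_def indicator_def)
    moreover have "integrable lborel (\<lambda>s. (exp s * (\<integral>x. norm (g x) \<partial>\<mu>)) * indicator {0..d} s)"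
      by (intro borel_integrable_atLeastAtMost continuous_intros)
    ultimately show "integrable lborel (\<lambda>s. \<integral>x. norm (F (fst (s,x)) (snd (s,x))) \<partial>\<mu>)" by simp
    show "AE s in lborel. integrable \<mu> (\<lambda>x. F (fst (s,x)) (snd (s,x)))"
    proof (rule AE_I2)
      fix s
      show "integrable \<mu> (\<lambda>x. F (fst (s,x)) (snd (s,x)))"
        unfolding F_def fst_conv snd_conv
        by (intro integrable_scaleR_right Bochner_Integration.integrable_bound[OF gi])
          (auto simp: E_def norm_mult measurable_cong_sets[OF sets refl])
    qed
  qed
  have "(\<integral>x. (\<integral>s. F s x \<partial>lborel) \<partial>\<mu>) = (\<integral>s. (\<integral>x. F s x \<partial>\<mu>) \<partial>lborel)"
    using P.Fubini_integral[of F] Fi by (simp add: split_beta')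
  also have "\<dots> = (\<integral>s. 0 \<partial>lborel)"
  proof -
    have "(\<integral>x. F s x \<partial>\<mu>) = 0" for s
    proof (cases "s \<in> {0..d}")
      case True
      then have "t + s \<in> {0..b}" using t by auto
      then show ?thesis using True ann by (simp add: F_def)
    qed (simp add: F_def)
    then show ?thesis by simp
  qed
  also have "(\<integral>x. (\<integral>s. F s x \<partial>lborel) \<partial>\<mu>) = (\<integral>x. g x * H d x * E t x \<partial>\<mu>)"
  proof (rule Bochner_Integration.integral_cong[OF refl])
    fix x
    have "(\<integral>s. F s x \<partial>lborel) = (\<integral>s. (g x * E t x) * (indicator {0..d} s *\<^sub>R exp (complex_of_real s * (1 + \<i> * complex_of_real x))) \<partial>lborel)"
    proof (rule Bochner_Integration.integral_cong[OF refl])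
      fix s
      have "exp (complex_of_real s * (1 + \<i> * complex_of_real x)) = exp (complex_of_real s) * exp (\<i> * complex_of_real (s * x))"
        by (simp add: exp_add[symmetric] algebra_simps)
      moreover have "E (t+s) x = E t x * exp (\<i> * complex_of_real (s * x))"
        by (simp add: E_def exp_add[symmetric] algebra_simps)
      ultimately show "F s x = (g x * E t x) * (indicator {0..d} s *\<^sub>R exp (complex_of_real s * (1 + \<i> * complex_of_real x)))"
        by (simp add: F_def scaleR_conv_of_real exp_of_real indicator_def)
    qed
    also have "\<dots> = (g x * E t x) * H d x"
      unfolding H_def by (rule integral_mult_right_zero)
    also have "\<dots> = g x * H d x * E t x"
      by (simp add: mult_ac)
    finally show "(\<integral>s. F s x \<partial>lborel) = g x * H d x * E t x" .
  qed
  finally show ?thesis by simp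
qed



lemma w_nz: "1 + \<i> * complex_of_real x \<noteq> 0"
proof
  assume "1 + \<i> * complex_of_real x = 0"
  then have "Re (1 + \<i> * complex_of_real x) = 0" by simp
  then show False by simp
qed

lemma norm_w: "norm (1 + \<i> * complex_of_real x) \<ge> max 1 \<bar>x\<bar>"
proof -
  have "norm (1 + \<i> * complex_of_real x) = sqrt (1 + x^2)"
    by (simp add: cmod_def)
  moreover have "sqrt (1 + x^2) \<ge> 1" by simp
  moreover have "sqrt (1 + x^2) \<ge> \<bar>x\<bar>"
    by (metis abs_ge_zero le_add_same_cancel2 real_sqrt_abs real_sqrt_le_mono zero_le_one)
  ultimately show ?thesis by simp
qed

lemma H_closed:
  assumes "d \<ge> 0"
  shows "H d x = (exp (complex_of_real d * (1 + \<i> * complex_of_real x)) - 1) / (1 + \<i> * complex_of_real x)"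
proof -
  define w where "w = 1 + \<i> * complex_of_real x"
  have w: "w \<noteq> 0" using w_nz unfolding w_def .
  have "H d x = (LBINT s:{0..d}. exp (complex_of_real s * w))"
    unfolding H_def set_lebesgue_integral_def w_def ..
  also have "\<dots> = (LBINT s=ereal 0..ereal d. exp (complex_of_real s * w))"
    using interval_integral_Icc[of 0 d "\<lambda>s. exp (complex_of_real s * w)"] assms
    by simp
  also have "\<dots> = exp (complex_of_real d * w) / w - exp (complex_of_real 0 * w) / w"
    apply (rule interval_integral_FTC_finite[where F="\<lambda>s. exp (complex_of_real s * w) / w"])
     apply (intro continuous_intros)
    apply (rule has_vector_derivative_real_field)
    using w by (auto intro!: derivative_eq_intros)
  finally show ?thesis using w by (simp add: w_def diff_divide_distrib)
qed

lemma H_nz: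
  assumes "d > 0" shows "H d x \<noteq> 0"
proof
  assume "H d x = 0"
  then have "exp (complex_of_real d * (1 + \<i> * complex_of_real x)) = 1"
    using H_closed[of d x] assms w_nz[of x] by simp
  then have "norm (exp (complex_of_real d * (1 + \<i> * complex_of_real x))) = 1" by simp
  moreover have "norm (exp (complex_of_real d * (1 + \<i> * complex_of_real x))) = exp d"
    by (simp add: norm_exp_eq_Re)
  ultimately show False using assms by simp
qed

lemma H_bound:
  assumes "d \<ge> 0" shows "norm (H d x) \<le> (exp d + 1) / max 1 \<bar>x\<bar>"
proof -
  define w where "w = 1 + \<i> * complex_of_real x"
  have "norm (exp (complex_of_real d * w) - 1) \<le> exp d + 1"
  proof -
    have "norm (exp (complex_of_real d * w) - 1) \<le> norm (exp (complex_of_real d * w)) + norm (1::complex)"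
      by (rule norm_triangle_ineq4)
    also have "norm (exp (complex_of_real d * w)) = exp d" by (simp add: norm_exp_eq_Re w_def)
    finally show ?thesis by simp
  qed
  moreover have "norm w \<ge> max 1 \<bar>x\<bar>" using norm_w unfolding w_def .
  ultimately have "norm (exp (complex_of_real d * w) - 1) / norm w \<le> (exp d + 1) / max 1 \<bar>x\<bar>"
    by (intro frac_le) auto
  then show ?thesis using H_closed[OF assms, of x] by (simp add: w_def norm_divide)
qed

lemma H_meas[measurable]: "d \<ge> 0 \<Longrightarrow> H d \<in> borel_measurable borel"
proof -
  assume d: "d \<ge> 0"
  have "H d = (\<lambda>x. (exp (complex_of_real d * (1 + \<i> * complex_of_real x)) - 1) / (1 + \<i> * complex_of_real x))"
    using H_closed[OF d] by auto
  also have "\<dots> \<in> borel_measurable borel"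
    by (intro borel_measurable_continuous_onI continuous_intros) (simp add: w_nz)
  finally show ?thesis .
qed


lemma Lp_integrable:
  fixes M :: "'a measure"
  assumes fm: "finite_measure M" and p: "1 \<le> p" and L: "in_Lp M p f"
  shows "integrable M f"
proof -
  interpret finite_measure M by fact
  have fmeas[measurable]: "f \<in> borel_measurable M" using L unfolding in_Lp_def by auto
  show ?thesis
  proof (cases "p = \<infinity>")
    case True
    then obtain C where "AE x in M. norm (f x) \<le> C" using L unfolding in_Lp_def by auto
    then show ?thesis using integrable_const_bound fmeas by blast
  next
    case False
    define q where "q = enn2real p"
    have q1: "q \<ge> 1" unfolding q_def using enn2real_mono[OF p] False by (simp add: top_unique less_top)
    have fin: "(\<integral>\<^sup>+ x. ennreal (norm (f x) powr q) \<partial>M) < \<infinity>"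
      using L False unfolding in_Lp_def q_def by auto
    have pt: "norm (f x) \<le> 1 + norm (f x) powr q" for x
    proof (cases "norm (f x) \<le> 1")
      case True then show ?thesis by (smt (verit) powr_ge_zero)
    next
      case False
      then have "norm (f x) powr 1 \<le> norm (f x) powr q" using q1 by (intro powr_mono) auto
      then show ?thesis using False by simp
    qed
    have "(\<integral>\<^sup>+ x. ennreal (norm (f x)) \<partial>M) \<le> (\<integral>\<^sup>+ x. (1 + ennreal (norm (f x) powr q)) \<partial>M)"
      by (intro nn_integral_mono) (metis ennreal_le_iff2 ennreal_plus ennreal_1 norm_ge_zero pt powr_ge_zero zero_le_one ennreal_leI)
    also have "\<dots> = (\<integral>\<^sup>+ x. 1 \<partial>M) + (\<integral>\<^sup>+ x. ennreal (norm (f x) powr q) \<partial>M)"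
      by (intro nn_integral_add) auto
    also have "\<dots> < \<infinity>" using fin by (simp add: less_top[symmetric] emeasure_real)
    finally show ?thesis by (intro integrableI_bounded) auto
  qed
qed



lemma meas_transfer:
  assumes "sets M = sets borel" "h \<in> borel_measurable borel"
  shows "h \<in> borel_measurable M"
  using assms measurable_cong_sets[OF assms(1) refl] by blast

lemma w_meas: "(\<lambda>x::real. ennreal (1 / (1 + \<bar>x\<bar> powr \<alpha>))) \<in> borel_measurable borel"
  by measurable

lemma AE_nu:
  fixes \<mu> :: "real measure"
  assumes sets: "sets \<mu> = sets borel"
  shows "(AE x in density \<mu> (\<lambda>x. ennreal (1 / (1 + \<bar>x\<bar> powr \<alpha>))). P x) \<longleftrightarrow> (AE x in \<mu>. P x)"
proof -
  have wm: "(\<lambda>x::real. ennreal (1 / (1 + \<bar>x\<bar> powr \<alpha>))) \<in> borel_measurable \<mu>"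
    by (rule meas_transfer[OF sets w_meas])
  have pos: "0 < ennreal (1 / (1 + \<bar>x\<bar> powr \<alpha>))" for x :: real
    by (simp add: add_pos_nonneg)
  show ?thesis unfolding AE_density[OF wm] using pos by simp
qed



lemma int_nu:
  fixes \<mu> :: "real measure" and g :: "real \<Rightarrow> complex"
  assumes sets: "sets \<mu> = sets borel" and gm: "g \<in> borel_measurable \<mu>"
  shows "(\<integral>x. g x \<partial>density \<mu> (\<lambda>x. ennreal (1 / (1 + \<bar>x\<bar> powr \<alpha>))))
     = (\<integral>x. complex_of_real (1 / (1 + \<bar>x\<bar> powr \<alpha>)) * g x \<partial>\<mu>)"
proof -
  have wm: "(\<lambda>x::real. 1 / (1 + \<bar>x\<bar> powr \<alpha>)) \<in> borel_measurable \<mu>"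
    by (rule meas_transfer[OF sets]) measurable
  have "(\<integral>x. g x \<partial>density \<mu> (\<lambda>x. ennreal (1 / (1 + \<bar>x\<bar> powr \<alpha>))))
     = (\<integral>x. (1 / (1 + \<bar>x\<bar> powr \<alpha>)) *\<^sub>R g x \<partial>\<mu>)"
    by (rule integral_density[OF gm wm]) (auto intro: add_pos_nonneg)
  then show ?thesis by (simp add: scaleR_conv_of_real)
qed

lemma dirA:
  fixes \<mu> :: "real measure" and f :: "real \<Rightarrow> complex"
  assumes sets: "sets \<mu> = sets borel" and fm: "finite_measure \<mu>" and p: "1 \<le> p"
    and L: "in_Lp (density \<mu> (\<lambda>x. ennreal (1 / (1 + \<bar>x\<bar> powr \<alpha>)))) p f"
    and nz: "\<not> (AE x in density \<mu> (\<lambda>x. ennreal (1 / (1 + \<bar>x\<bar> powr \<alpha>))). f x = 0)"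
    and ann: "\<forall>t\<in>{0..a}. (\<integral>x. f x * exp (\<i> * complex_of_real (t * x)) \<partial>density \<mu> (\<lambda>x. ennreal (1 / (1 + \<bar>x\<bar> powr \<alpha>)))) = 0"
  shows "\<exists>f'. in_Lp \<mu> p f' \<and> \<not> (AE x in \<mu>. f' x = 0) \<and>
        (\<forall>t\<in>{0..a}. (\<integral>x. f' x * exp (\<i> * complex_of_real (t * x)) \<partial>\<mu>) = 0)"
proof -
  define \<nu> where "\<nu> = density \<mu> (\<lambda>x. ennreal (1 / (1 + \<bar>x\<bar> powr \<alpha>)))"
  define w where "w x = 1 / (1 + \<bar>x\<bar> powr \<alpha>)" for x :: real
  have wpos: "w x > 0" for x unfolding w_def by (simp add: add_pos_nonneg)
  have wle: "w x \<le> 1" for x unfolding w_def by (simp add: divide_le_eq add_pos_nonneg)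
  have wm[measurable]: "w \<in> borel_measurable \<mu>"
    unfolding w_def by (rule meas_transfer[OF sets]) measurable
  have fmn: "f \<in> borel_measurable \<nu>" using L unfolding in_Lp_def \<nu>_def by auto
  then have fm[measurable]: "f \<in> borel_measurable \<mu>" unfolding \<nu>_def
    by (simp add: measurable_cong_sets[OF sets_density refl])
  define f' where "f' x = complex_of_real (w x) * f x" for x
  have f'm[measurable]: "f' \<in> borel_measurable \<mu>" unfolding f'_def by measurable
  have AEeq: "(AE x in \<nu>. P x) \<longleftrightarrow> (AE x in \<mu>. P x)" for P
    unfolding \<nu>_def by (rule AE_nu[OF sets])
  have nf': "norm (f' x) = w x * norm (f x)" for x
    unfolding f'_def using wpos[of x] by (simp add: norm_mult)
  have "in_Lp \<mu> p f'"
  proof (cases "p = \<infinity>")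
    case True
    then obtain C where "AE x in \<nu>. norm (f x) \<le> C" using L unfolding in_Lp_def \<nu>_def by auto
    then have "AE x in \<mu>. norm (f x) \<le> C" using AEeq by simp
    then have "AE x in \<mu>. norm (f' x) \<le> C"
    proof (rule AE_mp, intro AE_I2 impI)
      fix x assume "norm (f x) \<le> C"
      moreover have "w x * norm (f x) \<le> norm (f x)" using wle[of x] by (simp add: mult_left_le_one_le wpos less_imp_le)
      ultimately show "norm (f' x) \<le> C" using nf' by simp
    qed
    then show ?thesis using True unfolding in_Lp_def by auto
  next
    case False
    define q where "q = enn2real p"
    have q1: "q \<ge> 1" unfolding q_def using enn2real_mono[OF p] False by (simp add: top_unique less_top)
    have fin: "(\<integral>\<^sup>+ x. ennreal (norm (f x) powr q) \<partial>\<nu>) < \<infinity>"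
      using L False unfolding in_Lp_def q_def \<nu>_def by auto
    have "(\<integral>\<^sup>+ x. ennreal (norm (f' x) powr q) \<partial>\<mu>) \<le> (\<integral>\<^sup>+ x. ennreal (w x) * ennreal (norm (f x) powr q) \<partial>\<mu>)"
    proof (intro nn_integral_mono)
      fix x
      have "norm (f' x) powr q = w x powr q * norm (f x) powr q"
        using wpos[of x] by (simp add: nf' powr_mult)
      also have "\<dots> \<le> w x * norm (f x) powr q"
      proof (intro mult_right_mono)
        have "w x powr q \<le> w x powr 1" using wpos[of x] wle[of x] q1 by (intro powr_mono') auto
        then show "w x powr q \<le> w x" using wpos[of x] by simp
      qed simp
      finally show "ennreal (norm (f' x) powr q) \<le> ennreal (w x) * ennreal (norm (f x) powr q)"
        using wpos[of x] by (simp add: ennreal_mult[symmetric] ennreal_leI)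
    qed
    also have "\<dots> = (\<integral>\<^sup>+ x. ennreal (norm (f x) powr q) \<partial>\<nu>)"
      unfolding \<nu>_def w_def by (rule nn_integral_density[symmetric]) (auto intro: meas_transfer[OF sets])
    finally show ?thesis using fin False unfolding in_Lp_def q_def by auto
  qed
  moreover have "\<not> (AE x in \<mu>. f' x = 0)"
  proof
    assume "AE x in \<mu>. f' x = 0"
    moreover have "w x \<noteq> 0" for x using wpos[of x] by simp
    ultimately show False using nz AEeq unfolding \<nu>_def
      by (smt (verit, ccfv_SIG) AE_mp AE_I2 f'_def mult_eq_0_iff of_real_eq_0_iff)

  qed
  moreover have "\<forall>t\<in>{0..a}. (\<integral>x. f' x * exp (\<i> * complex_of_real (t * x)) \<partial>\<mu>) = 0"
  proof
    fix t assume t: "t \<in> {0..a}"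
    have "(\<integral>x. f x * exp (\<i> * complex_of_real (t * x)) \<partial>\<nu>) =
        (\<integral>x. complex_of_real (w x) * (f x * exp (\<i> * complex_of_real (t * x))) \<partial>\<mu>)"
    proof -
      have em[measurable]: "(\<lambda>x. exp (\<i> * complex_of_real (t * x))) \<in> borel_measurable \<mu>"
        by (rule meas_transfer[OF sets]) (intro borel_measurable_continuous_onI continuous_intros)
      show ?thesis unfolding \<nu>_def w_def by (rule int_nu[OF sets]) measurable
    qed
    moreover have "(\<integral>x. f x * exp (\<i> * complex_of_real (t * x)) \<partial>\<nu>) = 0"
      using ann t unfolding \<nu>_def by blast
    moreover have "(\<lambda>x. f' x * exp (\<i> * complex_of_real (t * x))) = (\<lambda>x. complex_of_real (w x) * (f x * exp (\<i> * complex_of_real (t * x))))"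
      by (simp add: f'_def mult.assoc)
    ultimately show "(\<integral>x. f' x * exp (\<i> * complex_of_real (t * x)) \<partial>\<mu>) = 0"
      by simp
  qed
  ultimately show ?thesis by blast
qed



lemma kernel_bound:
  assumes K: "K \<ge> 0" and h: "norm hx \<le> K / max 1 \<bar>x::real\<bar>" and a: "\<alpha> > 0" "\<alpha> \<le> real N"
  shows "norm hx ^ N * (1 + \<bar>x\<bar> powr \<alpha>) \<le> 2 * K ^ N"
proof -
  define m where "m = max 1 \<bar>x\<bar>"
  have m1: "m \<ge> 1" unfolding m_def by simp
  have "norm hx ^ N \<le> (K / m) ^ N" using h by (intro power_mono) (auto simp: m_def)
  also have "\<dots> = K ^ N / m ^ N" by (simp add: power_divide)
  finally have A: "norm hx ^ N \<le> K ^ N / m ^ N" .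
  have "\<bar>x\<bar> powr \<alpha> \<le> m powr \<alpha>" unfolding m_def using a by (intro powr_mono2) auto
  moreover have "1 \<le> m powr \<alpha>" using m1 a by (simp add: ge_one_powr_ge_zero)
  moreover have "m powr \<alpha> \<le> m powr real N" using m1 a by (intro powr_mono) auto
  moreover have "m powr real N = m ^ N" using m1 by (simp add: powr_realpow)
  ultimately have B: "1 + \<bar>x\<bar> powr \<alpha> \<le> 2 * m ^ N" by linarith
  have "norm hx ^ N * (1 + \<bar>x\<bar> powr \<alpha>) \<le> (K ^ N / m ^ N) * (2 * m ^ N)"
    using A B K m1 by (intro mult_mono) (auto simp: add_nonneg_nonneg)
  also have "\<dots> = 2 * K ^ N" using m1 by simp
  finally show ?thesis .
qed

lemma dirB:
  fixes \<mu> :: "real measure" and f :: "real \<Rightarrow> complex"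
  assumes sets: "sets \<mu> = sets borel" and fmu: "finite_measure \<mu>" and p: "1 \<le> p"
    and al: "\<alpha> > 0" and ab: "0 < b" "b < a"
    and L: "in_Lp \<mu> p f"
    and nz: "\<not> (AE x in \<mu>. f x = 0)"
    and ann: "\<forall>t\<in>{0..a}. (\<integral>x. f x * exp (\<i> * complex_of_real (t * x)) \<partial>\<mu>) = 0"
  shows "\<exists>g. in_Lp (density \<mu> (\<lambda>x. ennreal (1 / (1 + \<bar>x\<bar> powr \<alpha>)))) p g \<and>
        \<not> (AE x in density \<mu> (\<lambda>x. ennreal (1 / (1 + \<bar>x\<bar> powr \<alpha>))). g x = 0) \<and>
        (\<forall>t\<in>{0..b}. (\<integral>x. g x * exp (\<i> * complex_of_real (t * x)) \<partial>density \<mu> (\<lambda>x. ennreal (1 / (1 + \<bar>x\<bar> powr \<alpha>)))) = 0)"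
proof -
  define \<nu> where "\<nu> = density \<mu> (\<lambda>x. ennreal (1 / (1 + \<bar>x\<bar> powr \<alpha>)))"
  define u where "u x = 1 + \<bar>x\<bar> powr \<alpha>" for x :: real
  have upos: "u x > 0" for x unfolding u_def by (simp add: add_pos_nonneg)
  have u1: "u x \<ge> 1" for x unfolding u_def by simp
  have um[measurable]: "u \<in> borel_measurable \<mu>"
    unfolding u_def by (rule meas_transfer[OF sets]) measurable
  define N where "N = nat \<lceil>\<alpha>\<rceil>"
  have N: "\<alpha> \<le> real N" "N > 0" unfolding N_def using al by linarith+
  define d where "d = (a - b) / real N"
  have d: "d > 0" unfolding d_def using ab N by simp
  have Nd: "a - real N * d = b" unfolding d_def using N by simp
  define K where "K = exp d + 1"
  have K: "K \<ge> 0" unfolding K_def by (simp add: add_nonneg_nonneg)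
  have HK: "norm (H d x) \<le> K / max 1 \<bar>x\<bar>" for x unfolding K_def using H_bound d by simp
  have HK': "norm (H d x) \<le> K" for x
  proof -
    have "K / max 1 \<bar>x\<bar> \<le> K" using K by (simp add: divide_le_eq mult_le_cancel_left1 le_max_iff_disj) 
    then show ?thesis using HK[of x] by linarith
  qed
  define C where "C = 2 * K ^ N"
  have C: "C \<ge> 0" unfolding C_def using K by simp
  have HC: "norm (H d x) ^ N * u x \<le> C" for x
    unfolding C_def u_def by (rule kernel_bound[OF K HK al N(1)])
  have Hm[measurable]: "H d \<in> borel_measurable \<mu>"
    by (rule meas_transfer[OF sets H_meas]) (use d in simp)
  have fm[measurable]: "f \<in> borel_measurable \<mu>" using L unfolding in_Lp_def by auto
  have fi: "integrable \<mu> f" by (rule Lp_integrable[OF fmu p L])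
  have ind: "\<forall>t\<in>{0..a - real k * d}. (\<integral>x. f x * H d x ^ k * E t x \<partial>\<mu>) = 0" for k
  proof (induction k)
    case 0
    then show ?case using ann by (simp add: E_def)
  next
    case (Suc k)
    have gi: "integrable \<mu> (\<lambda>x. f x * H d x ^ k)"
    proof (rule Bochner_Integration.integrable_bound[of \<mu> "\<lambda>x. complex_of_real (K ^ k) * f x"])
      show "integrable \<mu> (\<lambda>x. complex_of_real (K ^ k) * f x)" using fi by simp
      show "(\<lambda>x. f x * H d x ^ k) \<in> borel_measurable \<mu>" by measurable
      show "AE x in \<mu>. norm (f x * H d x ^ k) \<le> norm (complex_of_real (K ^ k) * f x)"
      proof (intro AE_I2)
        fix x
        have "norm (H d x) ^ k \<le> K ^ k" using HK' by (intro power_mono) auto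
        then show "norm (f x * H d x ^ k) \<le> norm (complex_of_real (K ^ k) * f x)"
          using K by (simp add: norm_mult norm_power mult.commute[of "K ^ k"] mult_left_mono)
      qed
    qed
    show ?case
    proof
      fix t assume t: "t \<in> {0..a - real (Suc k) * d}"
      then have t': "t \<in> {0..(a - real k * d) - d}" by (simp add: algebra_simps)
      have "(\<integral>x. f x * H d x ^ k * H d x * E t x \<partial>\<mu>) = 0"
        by (rule step[OF sets fmu gi d Suc.IH t'])
      then show "(\<integral>x. f x * H d x ^ Suc k * E t x \<partial>\<mu>) = 0"
        by (simp add: mult_ac)
    qed
  qed
  define g where "g x = f x * H d x ^ N * complex_of_real (u x)" for x
  have gm[measurable]: "g \<in> borel_measurable \<mu>" unfolding g_def by measurable
  have ng: "norm (g x) \<le> norm (f x) * C" for x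
  proof -
    have "norm (g x) = norm (f x) * (norm (H d x) ^ N * u x)"
      unfolding g_def using upos[of x] by (simp add: norm_mult norm_power)
    also have "\<dots> \<le> norm (f x) * C" using HC by (intro mult_left_mono) auto
    finally show ?thesis .
  qed
  have AEeq: "(AE x in \<nu>. P x) \<longleftrightarrow> (AE x in \<mu>. P x)" for P
    unfolding \<nu>_def by (rule AE_nu[OF sets])
  have "in_Lp \<nu> p g"
  proof (cases "p = \<infinity>")
    case True
    then obtain B where "AE x in \<mu>. norm (f x) \<le> B" using L unfolding in_Lp_def by auto
    then have "AE x in \<mu>. norm (g x) \<le> B * C"
    proof (rule AE_mp, intro AE_I2 impI)
      fix x assume "norm (f x) \<le> B"
      then have "norm (f x) * C \<le> B * C" using C by (intro mult_right_mono) auto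
      then show "norm (g x) \<le> B * C" using ng[of x] by linarith
    qed
    then show ?thesis using True AEeq unfolding in_Lp_def \<nu>_def by (auto simp: measurable_cong_sets[OF sets_density refl])
  next
    case False
    define q where "q = enn2real p"
    have q1: "q \<ge> 1" unfolding q_def using enn2real_mono[OF p] False by (simp add: top_unique less_top)
    have fin: "(\<integral>\<^sup>+ x. ennreal (norm (f x) powr q) \<partial>\<mu>) < \<infinity>"
      using L False unfolding in_Lp_def q_def by auto
    have wm: "(\<lambda>x::real. ennreal (1 / (1 + \<bar>x\<bar> powr \<alpha>))) \<in> borel_measurable \<mu>"
      by (rule meas_transfer[OF sets w_meas])
    have "(\<integral>\<^sup>+ x. ennreal (norm (g x) powr q) \<partial>\<nu>) = (\<integral>\<^sup>+ x. ennreal (1 / (1 + \<bar>x\<bar> powr \<alpha>)) * ennreal (norm (g x) powr q) \<partial>\<mu>)"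
      unfolding \<nu>_def by (rule nn_integral_density[OF wm]) measurable
    also have "\<dots> \<le> (\<integral>\<^sup>+ x. ennreal (C powr q) * ennreal (norm (f x) powr q) \<partial>\<mu>)"
    proof (intro nn_integral_mono)
      fix x
      have "1 / (1 + \<bar>x\<bar> powr \<alpha>) * norm (g x) powr q \<le> norm (g x) powr q"
        using u1[of x] unfolding u_def by (simp add: divide_le_eq add_pos_nonneg mult_le_cancel_left1)
      also have "\<dots> \<le> (norm (f x) * C) powr q" using ng[of x] q1 by (intro powr_mono2) auto
      also have "\<dots> = C powr q * norm (f x) powr q" using C by (simp add: powr_mult mult.commute)
      finally show "ennreal (1 / (1 + \<bar>x\<bar> powr \<alpha>)) * ennreal (norm (g x) powr q) \<le> ennreal (C powr q) * ennreal (norm (f x) powr q)"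
        by (simp add: ennreal_mult[symmetric] ennreal_leI add_pos_nonneg)
    qed
    also have "\<dots> = ennreal (C powr q) * (\<integral>\<^sup>+ x. ennreal (norm (f x) powr q) \<partial>\<mu>)"
      by (rule nn_integral_cmult) measurable
    also have "\<dots> < \<infinity>" using fin by (simp add: ennreal_mult_less_top)
    finally show ?thesis using False unfolding in_Lp_def q_def \<nu>_def
      by (auto simp: measurable_cong_sets[OF sets_density refl])
  qed
  moreover have "\<not> (AE x in \<nu>. g x = 0)"
  proof
    assume "AE x in \<nu>. g x = 0"
    then have "AE x in \<mu>. g x = 0" using AEeq by simp
    moreover have "g x = 0 \<Longrightarrow> f x = 0" for x
      using H_nz[OF d, of x] upos[of x] unfolding g_def by auto
    ultimately have "AE x in \<mu>. f x = 0" by (auto elim: AE_mp)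
    then show False using nz by simp
  qed
  moreover have "\<forall>t\<in>{0..b}. (\<integral>x. g x * exp (\<i> * complex_of_real (t * x)) \<partial>\<nu>) = 0"
  proof
    fix t assume t: "t \<in> {0..b}"
    have em[measurable]: "(\<lambda>x. exp (\<i> * complex_of_real (t * x))) \<in> borel_measurable \<mu>"
      by (rule meas_transfer[OF sets]) (intro borel_measurable_continuous_onI continuous_intros)
    have "(\<integral>x. g x * exp (\<i> * complex_of_real (t * x)) \<partial>\<nu>) =
        (\<integral>x. complex_of_real (1 / (1 + \<bar>x\<bar> powr \<alpha>)) * (g x * exp (\<i> * complex_of_real (t * x))) \<partial>\<mu>)"
      unfolding \<nu>_def by (rule int_nu[OF sets]) measurable
    also have "\<dots> = (\<integral>x. f x * H d x ^ N * E t x \<partial>\<mu>)"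
    proof -
      have "complex_of_real (1 / (1 + \<bar>x\<bar> powr \<alpha>)) * (g x * exp (\<i> * complex_of_real (t * x))) = f x * H d x ^ N * E t x" for x
      proof -
        have "complex_of_real (1 / (1 + \<bar>x\<bar> powr \<alpha>)) * complex_of_real (u x) = 1"
        proof -
          have "(1 / (1 + \<bar>x\<bar> powr \<alpha>)) * u x = 1" using upos[of x] unfolding u_def by simp
          then show ?thesis by (metis of_real_1 of_real_mult)
        qed
        then show ?thesis unfolding g_def E_def
          by (metis (no_types, lifting) mult.commute mult.left_commute mult_1)
      qed
      then show ?thesis by simp
    qed
    also have "\<dots> = 0" using ind[of N] t Nd by auto
    finally show "(\<integral>x. g x * exp (\<i> * complex_of_real (t * x)) \<partial>\<nu>) = 0" .
  qed
  ultimately show ?thesis unfolding \<nu>_def by blast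
qed



theorem lemma1:
  fixes \<mu> :: "real measure" and \<alpha> :: real and p :: ennreal
  assumes "sets \<mu> = sets borel" and "finite_measure \<mu>"
    and "\<alpha> > 0" and "1 \<le> p"
  shows "gap_G \<mu> p = gap_G (density \<mu> (\<lambda>x. ennreal (1 / (1 + \<bar>x\<bar> powr \<alpha>)))) p"
proof -
  define \<nu> where "\<nu> = density \<mu> (\<lambda>x. ennreal (1 / (1 + \<bar>x\<bar> powr \<alpha>)))"
  define S where "S M = {a::real. a > 0 \<and>
      (\<exists>f. in_Lp M p f \<and> \<not> (AE x in M. f x = 0) \<and>
        (\<forall>t\<in>{0..a}. (\<integral>x. f x * exp (\<i> * complex_of_real (t * x)) \<partial>M) = 0))}" for M
  have G: "gap_G M p = Sup (ennreal ` S M)" for M unfolding gap_G_def S_def ..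
  have sub: "S \<nu> \<subseteq> S \<mu>"
  proof
    fix a assume "a \<in> S \<nu>"
    then obtain f where "a > 0" "in_Lp \<nu> p f" "\<not> (AE x in \<nu>. f x = 0)"
        "\<forall>t\<in>{0..a}. (\<integral>x. f x * exp (\<i> * complex_of_real (t * x)) \<partial>\<nu>) = 0"
      unfolding S_def by blast
    then show "a \<in> S \<mu>" using dirA[OF assms(1,2,4)] unfolding S_def \<nu>_def by blast
  qed
  have sup: "b \<in> S \<nu>" if aS: "a \<in> S \<mu>" and bb: "0 < b" "b < a" for a b
  proof -
    obtain f where "in_Lp \<mu> p f" "\<not> (AE x in \<mu>. f x = 0)"
        "\<forall>t\<in>{0..a}. (\<integral>x. f x * exp (\<i> * complex_of_real (t * x)) \<partial>\<mu>) = 0"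
      using aS unfolding S_def by blast
    from dirB[OF assms(1,2,4,3) bb this] show ?thesis unfolding S_def \<nu>_def using bb(1) by blast
  qed
  have "Sup (ennreal ` S \<nu>) \<le> Sup (ennreal ` S \<mu>)"
    using sub by (intro Sup_subset_mono image_mono)
  moreover have "Sup (ennreal ` S \<mu>) \<le> Sup (ennreal ` S \<nu>)"
  proof (rule Sup_least)
    fix y assume "y \<in> ennreal ` S \<mu>"
    then obtain a where a: "a \<in> S \<mu>" "y = ennreal a" by blast
    then have a0: "a > 0" unfolding S_def by auto
    show "y \<le> Sup (ennreal ` S \<nu>)"
    proof (rule ccontr)
      assume "\<not> y \<le> Sup (ennreal ` S \<nu>)"
      then have lt: "Sup (ennreal ` S \<nu>) < ennreal a" using a by simp
      then obtain r where r: "Sup (ennreal ` S \<nu>) = ennreal r" "r \<ge> 0"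
        by (metis ennreal_cases ennreal_less_top order.strict_trans top.not_eq_extremum)
      then have ra: "r < a" using lt by (simp add: ennreal_less_iff) 
      define b where "b = (r + a) / 2"
      have b: "0 < b" "b < a" "r < b" unfolding b_def using r ra a0 by auto
      then have "b \<in> S \<nu>" using sup[OF a(1)] by blast
      then have "ennreal b \<le> ennreal r" using r(1) by (metis Sup_upper imageI)
      then show False using b r by (simp add: ennreal_le_iff)
    qed
  qed
  ultimately show ?thesis unfolding G \<nu>_def by simp
qed

end
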